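(* Let $\underline{\mathrm{set}}$ be the category of finite sets. Then its Grothendieck heap $\mathrm{K}_0^{\mathrm{heap}}(\underline{\mathrm{set}})$ is isomorphic to the heap associated with $(\mathbb{Z},+)$, i.e. $\mathbb{Z}$ with $[a,b,c]=a-b+c$, via $\overline{A}\mapsto |A|$; moreover, the truss structure induced by the cartesian product, $\overline{A}\,\overline{B}=\overline{A\times B}$, coincides with the truss associated with the ring $(\mathbb{Z},+,\cdot)$.
   Context: A heap is a set $H$ with a ternary operation $[\_,\_,\_]:H^3\to H$ satisfying $[a,b,[c,d,e]]=[[a,b,c],d,e]$ and $[x,x,y]=y=[y,x,x]$; a truss is a heap with a multiplication satisfying $[wx,wy,wz]=w[x,y,z]$ and $[xw,yw,zw]=[x,y,z]w$. The truss associated with a ring $R$ is $R$ with $[a,b,c]=a-b+c$ and the ring multiplication. For an essentially small category $\mathcal{C}$, its Grothendieck heap $\mathrm{K}_0^{\mathrm{heap}}(\mathcal{C})$ is the heap generated by the isomorphism classes $\overline{X}$ of objects of $\mathcal{C}$, subject to the relations $[\overline{X},\overline{Y},\overline{Z}]=\overline{X\sqcup_Y Z}$ for every pushout square $X\leftarrow Y\rightarrow Z$ in $\mathcal{C}$ in which at least one of the two maps $Y\to X$, $Y\to Z$ is a monomorphism. *)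

theory Defs
  imports Main "HOL-Library.FuncSet"
begin

definition heap :: "'a set \<Rightarrow> ('a \<Rightarrow> 'a \<Rightarrow> 'a \<Rightarrow> 'a) \<Rightarrow> bool" where
  "heap H t \<longleftrightarrow>
     (\<forall>a\<in>H. \<forall>b\<in>H. \<forall>c\<in>H. t a b c \<in> H) \<and>
     (\<forall>a\<in>H. \<forall>b\<in>H. \<forall>c\<in>H. \<forall>d\<in>H. \<forall>e\<in>H. t a b (t c d e) = t (t a b c) d e) \<and>
     (\<forall>x\<in>H. \<forall>y\<in>H. t x x y = y \<and> t y x x = y)"

definition truss :: "'a set \<Rightarrow> ('a \<Rightarrow> 'a \<Rightarrow> 'a \<Rightarrow> 'a) \<Rightarrow> ('a \<Rightarrow> 'a \<Rightarrow> 'a) \<Rightarrow> bool" where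
  "truss H t m \<longleftrightarrow> heap H t \<and>
     (\<forall>a\<in>H. \<forall>b\<in>H. m a b \<in> H) \<and>
     (\<forall>a\<in>H. \<forall>b\<in>H. \<forall>c\<in>H. m (m a b) c = m a (m b c)) \<and>
     (\<forall>w\<in>H. \<forall>x\<in>H. \<forall>y\<in>H. \<forall>z\<in>H.
        t (m w x) (m w y) (m w z) = m w (t x y z) \<and>
        t (m x w) (m y w) (m z w) = m (t x y z) w)"

text \<open>Objects: finite sets of natural numbers (an essentially small model of the
  category of finite sets); morphisms A \<rightarrow> B: functions mapping A into B,
  considered up to their values on A.\<close>

definition fs_iso :: "nat set \<Rightarrow> nat set \<Rightarrow> bool" where
  "fs_iso A B \<longleftrightarrow> (\<exists>f g. f \<in> A \<rightarrow> B \<and> g \<in> B \<rightarrow> A \<and>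
      (\<forall>a\<in>A. g (f a) = a) \<and> (\<forall>b\<in>B. f (g b) = b))"

definition fs_mono :: "(nat \<Rightarrow> nat) \<Rightarrow> nat set \<Rightarrow> nat set \<Rightarrow> bool" where
  "fs_mono f Y X \<longleftrightarrow> f \<in> Y \<rightarrow> X \<and>
     (\<forall>W::nat set. finite W \<longrightarrow> (\<forall>a\<in>W \<rightarrow> Y. \<forall>b\<in>W \<rightarrow> Y.
        (\<forall>w\<in>W. f (a w) = f (b w)) \<longrightarrow> (\<forall>w\<in>W. a w = b w)))"

definition fs_pushout ::
  "nat set \<Rightarrow> nat set \<Rightarrow> nat set \<Rightarrow> nat set \<Rightarrow>
   (nat \<Rightarrow> nat) \<Rightarrow> (nat \<Rightarrow> nat) \<Rightarrow> (nat \<Rightarrow> nat) \<Rightarrow> (nat \<Rightarrow> nat) \<Rightarrow> bool" where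
  "fs_pushout X Y Z P f g i j \<longleftrightarrow>
     finite X \<and> finite Y \<and> finite Z \<and> finite P \<and>
     f \<in> Y \<rightarrow> X \<and> g \<in> Y \<rightarrow> Z \<and> i \<in> X \<rightarrow> P \<and> j \<in> Z \<rightarrow> P \<and>
     (\<forall>y\<in>Y. i (f y) = j (g y)) \<and>
     (\<forall>W::nat set. finite W \<longrightarrow> (\<forall>a\<in>X \<rightarrow> W. \<forall>b\<in>Z \<rightarrow> W.
        (\<forall>y\<in>Y. a (f y) = b (g y)) \<longrightarrow>
        (\<exists>u\<in>P \<rightarrow> W. (\<forall>x\<in>X. u (i x) = a x) \<and> (\<forall>z\<in>Z. u (j z) = b z) \<and>
           (\<forall>u'\<in>P \<rightarrow> W. (\<forall>x\<in>X. u' (i x) = a x) \<and> (\<forall>z\<in>Z. u' (j z) = b z)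
               \<longrightarrow> (\<forall>p\<in>P. u' p = u p)))))"

datatype 'g hterm = Gen 'g | Tri "'g hterm" "'g hterm" "'g hterm"

primrec gens :: "'g hterm \<Rightarrow> 'g set" where
  "gens (Gen A) = {A}"
| "gens (Tri a b c) = gens a \<union> gens b \<union> gens c"

definition wf_terms :: "nat set hterm set" where
  "wf_terms = {t. \<forall>A\<in>gens t. finite A}"

inductive_set gh_rel :: "(nat set hterm \<times> nat set hterm) set" where
  refl: "a \<in> wf_terms \<Longrightarrow> (a, a) \<in> gh_rel"
| sym: "(a, b) \<in> gh_rel \<Longrightarrow> (b, a) \<in> gh_rel"
| trans: "(a, b) \<in> gh_rel \<Longrightarrow> (b, c) \<in> gh_rel \<Longrightarrow> (a, c) \<in> gh_rel"
| cong: "(a, a') \<in> gh_rel \<Longrightarrow> (b, b') \<in> gh_rel \<Longrightarrow> (c, c') \<in> gh_rel \<Longrightarrow>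
         (Tri a b c, Tri a' b' c') \<in> gh_rel"
| assoc: "a \<in> wf_terms \<Longrightarrow> b \<in> wf_terms \<Longrightarrow> c \<in> wf_terms \<Longrightarrow> d \<in> wf_terms \<Longrightarrow>
          e \<in> wf_terms \<Longrightarrow> (Tri a b (Tri c d e), Tri (Tri a b c) d e) \<in> gh_rel"
| malcev1: "x \<in> wf_terms \<Longrightarrow> y \<in> wf_terms \<Longrightarrow> (Tri x x y, y) \<in> gh_rel"
| malcev2: "x \<in> wf_terms \<Longrightarrow> y \<in> wf_terms \<Longrightarrow> (Tri y x x, y) \<in> gh_rel"
| iso: "finite A \<Longrightarrow> finite B \<Longrightarrow> fs_iso A B \<Longrightarrow> (Gen A, Gen B) \<in> gh_rel"
| pushout: "fs_pushout X Y Z P f1 g1 i1 j1 \<Longrightarrow> fs_mono f1 Y X \<or> fs_mono g1 Y Z \<Longrightarrow>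
            (Tri (Gen X) (Gen Y) (Gen Z), Gen P) \<in> gh_rel"

definition K0 :: "nat set hterm set set" where
  "K0 = wf_terms // gh_rel"

definition K0_op :: "nat set hterm set \<Rightarrow> nat set hterm set \<Rightarrow> nat set hterm set \<Rightarrow> nat set hterm set" where
  "K0_op x y z = gh_rel `` {Tri (SOME a. a \<in> x) (SOME b. b \<in> y) (SOME c. c \<in> z)}"

definition K0_cl :: "nat set \<Rightarrow> nat set hterm set" where
  "K0_cl A = gh_rel `` {Gen A}"

end

theory Submission imports Defs "HOL-Algebra.Group" begin

primrec ev :: "nat set hterm \<Rightarrow> int" where
  "ev (Gen A) = int (card A)"
| "ev (Tri a b c) = ev a - ev b + ev c"

lemma wf_Gen[simp]: "Gen A \<in> wf_terms \<longleftrightarrow> finite A"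
  by (simp add: wf_terms_def)
lemma wf_Tri[simp]: "Tri a b c \<in> wf_terms \<longleftrightarrow> a \<in> wf_terms \<and> b \<in> wf_terms \<and> c \<in> wf_terms"
  by (auto simp add: wf_terms_def)

lemma fs_iso_card: "fs_iso A B \<Longrightarrow> card A = card B"
proof -
  assume "fs_iso A B"
  then obtain f g where "f \<in> A \<rightarrow> B" "g \<in> B \<rightarrow> A" "\<forall>a\<in>A. g (f a) = a" "\<forall>b\<in>B. f (g b) = b"
    unfolding fs_iso_def by blast
  then have "bij_betw f A B" by (intro bij_betw_byWitness[where f'=g]) auto
  then show ?thesis by (rule bij_betw_same_card)
qed

lemma bij_fs_iso: "bij_betw f A B \<Longrightarrow> fs_iso A B"
  unfolding fs_iso_def
  apply (rule exI[of _ f], rule exI[of _ "inv_into A f"])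
  by (auto simp: bij_betw_def inv_into_f_f f_inv_into_f inv_into_into)

lemma fs_mono_inj: "fs_mono f Y X \<Longrightarrow> inj_on f Y"
proof (rule inj_onI)
  fix y1 y2 assume m: "fs_mono f Y X" and y: "y1 \<in> Y" "y2 \<in> Y" "f y1 = f y2"
  have "\<forall>a\<in>{0::nat} \<rightarrow> Y. \<forall>b\<in>{0} \<rightarrow> Y. (\<forall>w\<in>{0}. f (a w) = f (b w)) \<longrightarrow> (\<forall>w\<in>{0}. a w = b w)"
    using m unfolding fs_mono_def by blast
  from this[rule_format, of "\<lambda>_. y1" "\<lambda>_. y2"] y show "y1 = y2" by auto
qed

lemma po_swap:
  assumes po: "fs_pushout X Y Z P f g i j" shows "fs_pushout Z Y X P g f j i"
proof -
  have Ux: "\<forall>W::nat set. finite W \<longrightarrow> (\<forall>a\<in>X \<rightarrow> W. \<forall>b\<in>Z \<rightarrow> W.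
        (\<forall>y\<in>Y. a (f y) = b (g y)) \<longrightarrow>
        (\<exists>u\<in>P \<rightarrow> W. (\<forall>x\<in>X. u (i x) = a x) \<and> (\<forall>z\<in>Z. u (j z) = b z) \<and>
           (\<forall>u'\<in>P \<rightarrow> W. (\<forall>x\<in>X. u' (i x) = a x) \<and> (\<forall>z\<in>Z. u' (j z) = b z)
               \<longrightarrow> (\<forall>p\<in>P. u' p = u p))))"
    using po unfolding fs_pushout_def by (elim conjE) assumption
  have U: "\<exists>u\<in>P \<rightarrow> W. (\<forall>x\<in>X. u (i x) = a x) \<and> (\<forall>z\<in>Z. u (j z) = b z) \<and>
           (\<forall>u'\<in>P \<rightarrow> W. (\<forall>x\<in>X. u' (i x) = a x) \<and> (\<forall>z\<in>Z. u' (j z) = b z)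
               \<longrightarrow> (\<forall>p\<in>P. u' p = u p))"
    if "finite W" "a \<in> X \<rightarrow> W" "b \<in> Z \<rightarrow> W" "\<forall>y\<in>Y. a (f y) = b (g y)" for W :: "nat set" and a b
    using Ux[rule_format, OF that(1) that(2) that(3)] that(4) by blast
  have U2: "\<exists>u\<in>P \<rightarrow> W. (\<forall>x\<in>Z. u (j x) = a x) \<and> (\<forall>z\<in>X. u (i z) = b z) \<and>
           (\<forall>u'\<in>P \<rightarrow> W. (\<forall>x\<in>Z. u' (j x) = a x) \<and> (\<forall>z\<in>X. u' (i z) = b z)
               \<longrightarrow> (\<forall>p\<in>P. u' p = u p))"
    if h: "finite W" "a \<in> Z \<rightarrow> W" "b \<in> X \<rightarrow> W" "\<forall>y\<in>Y. a (g y) = b (f y)" for W :: "nat set" and a b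
  proof -
    from h(4) have "\<forall>y\<in>Y. b (f y) = a (g y)" by simp
    from U[OF h(1,3,2) this] show ?thesis by blast
  qed
  have rest: "finite X \<and> finite Y \<and> finite Z \<and> finite P \<and>
     f \<in> Y \<rightarrow> X \<and> g \<in> Y \<rightarrow> Z \<and> i \<in> X \<rightarrow> P \<and> j \<in> Z \<rightarrow> P \<and>
     (\<forall>y\<in>Y. i (f y) = j (g y))" using po unfolding fs_pushout_def by (elim conjE) simp
  show ?thesis unfolding fs_pushout_def
  proof (intro conjI allI impI ballI)
    fix W :: "nat set" and a b assume "finite W" "a \<in> Z \<rightarrow> W" "b \<in> X \<rightarrow> W" "\<forall>y\<in>Y. a (g y) = b (f y)"
    from U2[OF this] show "\<exists>u\<in>P \<rightarrow> W. (\<forall>x\<in>Z. u (j x) = a x) \<and> (\<forall>z\<in>X. u (i z) = b z) \<and>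
           (\<forall>u'\<in>P \<rightarrow> W. (\<forall>x\<in>Z. u' (j x) = a x) \<and> (\<forall>z\<in>X. u' (i z) = b z)
               \<longrightarrow> (\<forall>p\<in>P. u' p = u p))" .
  qed (use rest in auto)
qed

lemma po_card:
  assumes po: "fs_pushout X Y Z P f g i j" and inj: "inj_on f Y"
  shows "card P + card Y = card X + card Z"
proof -
  have fin: "finite X" "finite Y" "finite Z" "finite P" and fns: "f \<in> Y \<rightarrow> X" "g \<in> Y \<rightarrow> Z" "i \<in> X \<rightarrow> P" "j \<in> Z \<rightarrow> P"
    and com: "\<forall>y\<in>Y. i (f y) = j (g y)"
    using po unfolding fs_pushout_def by (elim conjE; simp)+
  have Ux: "\<forall>W::nat set. finite W \<longrightarrow> (\<forall>a\<in>X \<rightarrow> W. \<forall>b\<in>Z \<rightarrow> W.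
        (\<forall>y\<in>Y. a (f y) = b (g y)) \<longrightarrow>
        (\<exists>u\<in>P \<rightarrow> W. (\<forall>x\<in>X. u (i x) = a x) \<and> (\<forall>z\<in>Z. u (j z) = b z) \<and>
           (\<forall>u'\<in>P \<rightarrow> W. (\<forall>x\<in>X. u' (i x) = a x) \<and> (\<forall>z\<in>Z. u' (j z) = b z)
               \<longrightarrow> (\<forall>p\<in>P. u' p = u p))))"
    using po unfolding fs_pushout_def by (elim conjE) assumption
  have U: "\<exists>u\<in>P \<rightarrow> W. (\<forall>x\<in>X. u (i x) = a x) \<and> (\<forall>z\<in>Z. u (j z) = b z) \<and>
           (\<forall>u'\<in>P \<rightarrow> W. (\<forall>x\<in>X. u' (i x) = a x) \<and> (\<forall>z\<in>Z. u' (j z) = b z)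
               \<longrightarrow> (\<forall>p\<in>P. u' p = u p))"
    if "finite W" "a \<in> X \<rightarrow> W" "b \<in> Z \<rightarrow> W" "\<forall>y\<in>Y. a (f y) = b (g y)" for W :: "nat set" and a b
    using Ux[rule_format, OF that(1) that(2) that(3)] that(4) by blast
  have surj: "P \<subseteq> i ` X \<union> j ` Z"
  proof
    fix p assume p: "p \<in> P"
    obtain u where u: "\<forall>u'\<in>P \<rightarrow> {0::nat,1}. (\<forall>x\<in>X. u' (i x) = 0) \<and> (\<forall>z\<in>Z. u' (j z) = 0)
               \<longrightarrow> (\<forall>p\<in>P. u' p = u p)"
      using U[of "{0::nat,1}" "\<lambda>_. 0" "\<lambda>_. 0"] by auto
    have "(\<lambda>_. 0) p = u p" using u p by auto
    moreover
    have u2: "(\<lambda>q. if q \<in> i ` X \<union> j ` Z then 0::nat else 1) \<in> P \<rightarrow> {0,1}" by auto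
    have "(\<forall>x\<in>X. (\<lambda>q. if q \<in> i ` X \<union> j ` Z then 0::nat else 1) (i x) = 0) \<and>
          (\<forall>z\<in>Z. (\<lambda>q. if q \<in> i ` X \<union> j ` Z then 0::nat else 1) (j z) = 0)" by auto
    with bspec[OF u u2] have "(\<lambda>q. if q \<in> i ` X \<union> j ` Z then 0::nat else 1) p = u p"
      using p by blast
    ultimately show "p \<in> i ` X \<union> j ` Z" by (auto split: if_splits)
  qed
  have injj: "inj_on j Z"
  proof (rule inj_onI, rule ccontr)
    fix z1 z2 assume z: "z1 \<in> Z" "z2 \<in> Z" "j z1 = j z2" "z1 \<noteq> z2"
    define b where "b = (\<lambda>z. if z = z1 then 1::nat else 0)"
    define a where "a = (\<lambda>x. if x \<in> f ` Y \<and> g (the_inv_into Y f x) = z1 then 1::nat else 0)"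
    have "\<forall>y\<in>Y. a (f y) = b (g y)" using inj by (auto simp: a_def b_def the_inv_into_f_f)
    then obtain u where "\<forall>z\<in>Z. u (j z) = b z"
      using U[of "{0,1}" a b] by (auto simp: a_def b_def)
    then have "u (j z1) = 1" "u (j z2) = 0" using z(1,2,4) by (auto simp: b_def)
    then show False using z by simp
  qed
  have sep: "\<And>x1. x1 \<in> X - f ` Y \<Longrightarrow> (\<forall>x2\<in>X. x2 \<noteq> x1 \<longrightarrow> i x2 \<noteq> i x1) \<and> (\<forall>z\<in>Z. j z \<noteq> i x1)"
  proof -
    fix x1 assume x1: "x1 \<in> X - f ` Y"
    define a where "a = (\<lambda>x. if x = x1 then 1::nat else 0)"
    have "\<forall>y\<in>Y. a (f y) = (\<lambda>_. 0) (g y)" using x1 by (auto simp: a_def)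
    then obtain u where u: "\<forall>x\<in>X. u (i x) = a x" "\<forall>z\<in>Z. u (j z) = 0"
      using U[of "{0,1}" a "\<lambda>_. 0"] by (auto simp: a_def)
    have u1: "u (i x1) = 1" using u x1 by (auto simp: a_def)
    show "(\<forall>x2\<in>X. x2 \<noteq> x1 \<longrightarrow> i x2 \<noteq> i x1) \<and> (\<forall>z\<in>Z. j z \<noteq> i x1)"
    proof (intro conjI ballI impI)
      fix x2 assume "x2 \<in> X" "x2 \<noteq> x1"
      then have "u (i x2) = 0" using u by (auto simp: a_def)
      then show "i x2 \<noteq> i x1" using u1 by auto
    next
      fix z assume "z \<in> Z"
      then have "u (j z) = 0" using u by auto
      then show "j z \<noteq> i x1" using u1 by auto
    qed
  qed
  have PP: "P = j ` Z \<union> i ` (X - f ` Y)"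
  proof
    show "P \<subseteq> j ` Z \<union> i ` (X - f ` Y)"
    proof
      fix p assume "p \<in> P"
      then consider "p \<in> j ` Z" | x where "x \<in> X" "p = i x" using surj by blast
      then show "p \<in> j ` Z \<union> i ` (X - f ` Y)"
      proof cases
        case (2 x) then show ?thesis
          using com fns by (cases "x \<in> f ` Y") auto
      qed auto
    qed
  qed (use fns in auto)
  have disj: "j ` Z \<inter> i ` (X - f ` Y) = {}" using sep by fastforce
  have inji: "inj_on i (X - f ` Y)" using sep by (meson DiffD1 inj_onI)
  have "card P = card (j ` Z) + card (i ` (X - f ` Y))"
    unfolding PP using disj fin by (intro card_Un_disjoint) auto
  also have "\<dots> = card Z + card (X - f ` Y)" using injj inji by (simp add: card_image)
  also have "card (X - f ` Y) = card X - card Y"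
    using fns fin inj by (subst card_Diff_subset) (auto simp: card_image)
  finally have cP: "card P = card Z + (card X - card Y)" .
  have "card Y \<le> card X" using fns fin inj by (metis card_image card_mono funcset_image)
  then show ?thesis using cP by linarith
qed


lemma gh_sound: "(a, b) \<in> gh_rel \<Longrightarrow> a \<in> wf_terms \<and> b \<in> wf_terms \<and> ev a = ev b"
proof (induction rule: gh_rel.induct)
  case (iso A B) then show ?case by (simp add: fs_iso_card)
next
  case (pushout X Y Z P f1 g1 i1 j1)
  have fin: "finite X" "finite Y" "finite Z" "finite P" using pushout(1) unfolding fs_pushout_def by auto
  from pushout(2) have "card P + card Y = card X + card Z"
  proof
    assume "fs_mono f1 Y X" then show ?thesis using po_card[OF pushout(1)] fs_mono_inj by blast
  next
    assume "fs_mono g1 Y Z" then show ?thesis using po_card[OF po_swap[OF pushout(1)]] fs_mono_inj by fastforce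
  qed
  then show ?case using fin by simp
qed auto

lemma union_po: "finite X \<Longrightarrow> finite Z \<Longrightarrow> (Tri (Gen X) (Gen (X \<inter> Z)) (Gen Z), Gen (X \<union> Z)) \<in> gh_rel"
proof (rule gh_rel.pushout[of X "X \<inter> Z" Z "X \<union> Z" id id id id])
  assume f: "finite X" "finite Z"
  show "fs_mono id (X \<inter> Z) X \<or> fs_mono id (X \<inter> Z) Z" unfolding fs_mono_def by auto
  show "fs_pushout X (X \<inter> Z) Z (X \<union> Z) id id id id"
    unfolding fs_pushout_def
  proof (intro conjI allI impI ballI)
    fix W :: "nat set" and a b assume h: "finite W" "a \<in> X \<rightarrow> W" "b \<in> Z \<rightarrow> W" "\<forall>y\<in>X \<inter> Z. a (id y) = b (id y)"
    show "\<exists>u\<in>X \<union> Z \<rightarrow> W. (\<forall>x\<in>X. u (id x) = a x) \<and> (\<forall>z\<in>Z. u (id z) = b z) \<and>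
           (\<forall>u'\<in>X \<union> Z \<rightarrow> W. (\<forall>x\<in>X. u' (id x) = a x) \<and> (\<forall>z\<in>Z. u' (id z) = b z)
               \<longrightarrow> (\<forall>p\<in>X \<union> Z. u' p = u p))"
      by (rule bexI[of _ "\<lambda>p. if p \<in> X then a p else b p"]) (use h in auto)
  qed (use f in auto)
qed

lemma gh_wf: "(a, b) \<in> gh_rel \<Longrightarrow> a \<in> wf_terms \<and> b \<in> wf_terms"
  using gh_sound by blast

lemma gh_equiv: "equiv wf_terms gh_rel"
proof (rule equivI)
  show "gh_rel \<subseteq> wf_terms \<times> wf_terms" using gh_wf by auto
  show "refl_on wf_terms gh_rel" unfolding refl_on_def by (auto intro: gh_rel.refl)
  show "sym gh_rel" by (auto intro: symI gh_rel.sym)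
  show "trans gh_rel" by (auto intro: transI gh_rel.trans)
qed

abbreviation cls :: "nat set hterm \<Rightarrow> nat set hterm set" where
  "cls t \<equiv> gh_rel `` {t}"

lemma cls_in: "t \<in> wf_terms \<Longrightarrow> cls t \<in> K0"
  unfolding K0_def by (rule quotientI)

lemma cls_eq: "(a, b) \<in> gh_rel \<Longrightarrow> cls a = cls b"
  using gh_equiv equiv_class_eq_iff by metis

lemma cls_self: "t \<in> wf_terms \<Longrightarrow> t \<in> cls t"
  using gh_equiv equiv_class_self by metis

lemma K0_mem: "x \<in> K0 \<Longrightarrow> a \<in> x \<Longrightarrow> x = cls a \<and> a \<in> wf_terms"
proof -
  assume x: "x \<in> K0" and a: "a \<in> x"
  from x obtain b where b: "x = cls b" "b \<in> wf_terms" unfolding K0_def by (rule quotientE)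
  then have "(b, a) \<in> gh_rel" using a by auto
  then show ?thesis using b cls_eq gh_wf by metis
qed

lemma K0_E: "x \<in> K0 \<Longrightarrow> (\<And>a. x = cls a \<Longrightarrow> a \<in> wf_terms \<Longrightarrow> P) \<Longrightarrow> P"
  unfolding K0_def by (rule quotientE)

lemma some_cls: "t \<in> wf_terms \<Longrightarrow> (t, SOME a. a \<in> cls t) \<in> gh_rel"
proof -
  assume "t \<in> wf_terms"
  then have "\<exists>a. a \<in> cls t" using cls_self by blast
  then have "(SOME a. a \<in> cls t) \<in> cls t" by (rule someI_ex)
  then show ?thesis by simp
qed

lemma K0_op_cls: "a \<in> wf_terms \<Longrightarrow> b \<in> wf_terms \<Longrightarrow> c \<in> wf_terms \<Longrightarrow>
   K0_op (cls a) (cls b) (cls c) = cls (Tri a b c)"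
  unfolding K0_op_def
  by (rule cls_eq, rule gh_rel.sym, rule gh_rel.cong) (auto intro: some_cls[simplified])

definition phi :: "nat set hterm set \<Rightarrow> int" where
  "phi x = ev (SOME a. a \<in> x)"

lemma phi_cls: "t \<in> wf_terms \<Longrightarrow> phi (cls t) = ev t"
  unfolding phi_def using some_cls gh_sound by metis

lemma phi_op: "x \<in> K0 \<Longrightarrow> y \<in> K0 \<Longrightarrow> z \<in> K0 \<Longrightarrow> phi (K0_op x y z) = phi x - phi y + phi z"
  by (elim K0_E) (simp add: K0_op_cls phi_cls)

lemma K0_op_closed: "x \<in> K0 \<Longrightarrow> y \<in> K0 \<Longrightarrow> z \<in> K0 \<Longrightarrow> K0_op x y z \<in> K0"
  by (elim K0_E) (simp add: K0_op_cls cls_in)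

lemma heap_K0: "heap K0 K0_op"
  unfolding heap_def
proof (intro conjI ballI)
  fix a b c assume "a \<in> K0" "b \<in> K0" "c \<in> K0" then show "K0_op a b c \<in> K0" by (rule K0_op_closed)
next
  fix a b c d e assume "a \<in> K0" "b \<in> K0" "c \<in> K0" "d \<in> K0" "e \<in> K0"
  then show "K0_op a b (K0_op c d e) = K0_op (K0_op a b c) d e"
    by (elim K0_E) (simp add: K0_op_cls cls_eq gh_rel.assoc)
next
  fix x y assume "x \<in> K0" "y \<in> K0"
  then show "K0_op x x y = y" "K0_op y x x = y"
    by (elim K0_E, simp add: K0_op_cls cls_eq gh_rel.malcev1 gh_rel.malcev2)+
qed

definition hgrp :: "'a set \<Rightarrow> ('a \<Rightarrow> 'a \<Rightarrow> 'a \<Rightarrow> 'a) \<Rightarrow> 'a \<Rightarrow> 'a monoid" where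
  "hgrp H t e = \<lparr>carrier = H, mult = (\<lambda>x y. t x e y), one = e\<rparr>"

lemma heap_group:
  assumes h: "heap H t" and e: "e \<in> H"
  shows "group (hgrp H t e)"
    and "\<And>x y z. x \<in> H \<Longrightarrow> y \<in> H \<Longrightarrow> z \<in> H \<Longrightarrow>
          t x y z = x \<otimes>\<^bsub>hgrp H t e\<^esub> inv\<^bsub>hgrp H t e\<^esub> y \<otimes>\<^bsub>hgrp H t e\<^esub> z"
proof -
  have cl: "\<And>a b c. a \<in> H \<Longrightarrow> b \<in> H \<Longrightarrow> c \<in> H \<Longrightarrow> t a b c \<in> H"
    and as: "\<And>a b c d f. a \<in> H \<Longrightarrow> b \<in> H \<Longrightarrow> c \<in> H \<Longrightarrow> d \<in> H \<Longrightarrow> f \<in> H \<Longrightarrow> t a b (t c d f) = t (t a b c) d f"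
    and m1: "\<And>x y. x \<in> H \<Longrightarrow> y \<in> H \<Longrightarrow> t x x y = y"
    and m2: "\<And>x y. x \<in> H \<Longrightarrow> y \<in> H \<Longrightarrow> t y x x = y"
    using h unfolding heap_def by blast+
  show G: "group (hgrp H t e)"
  proof (rule groupI)
    show "\<And>x y. x \<in> carrier (hgrp H t e) \<Longrightarrow> y \<in> carrier (hgrp H t e) \<Longrightarrow> x \<otimes>\<^bsub>hgrp H t e\<^esub> y \<in> carrier (hgrp H t e)"
      using cl e by (simp add: hgrp_def)
    show "\<one>\<^bsub>hgrp H t e\<^esub> \<in> carrier (hgrp H t e)" using e by (simp add: hgrp_def)
    show "\<And>x y z. x \<in> carrier (hgrp H t e) \<Longrightarrow> y \<in> carrier (hgrp H t e) \<Longrightarrow> z \<in> carrier (hgrp H t e) \<Longrightarrow>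
         x \<otimes>\<^bsub>hgrp H t e\<^esub> y \<otimes>\<^bsub>hgrp H t e\<^esub> z = x \<otimes>\<^bsub>hgrp H t e\<^esub> (y \<otimes>\<^bsub>hgrp H t e\<^esub> z)"
      using as e by (simp add: hgrp_def)
    show "\<And>x. x \<in> carrier (hgrp H t e) \<Longrightarrow> \<one>\<^bsub>hgrp H t e\<^esub> \<otimes>\<^bsub>hgrp H t e\<^esub> x = x"
      using m1 e by (simp add: hgrp_def)
    show "\<And>x. x \<in> carrier (hgrp H t e) \<Longrightarrow> \<exists>y\<in>carrier (hgrp H t e). y \<otimes>\<^bsub>hgrp H t e\<^esub> x = \<one>\<^bsub>hgrp H t e\<^esub>"
    proof -
      fix x assume x: "x \<in> carrier (hgrp H t e)"
      then have xH: "x \<in> H" by (simp add: hgrp_def)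
      have "t (t e x e) e x = t e x (t e e x)" using as[of e x e e x] xH e by simp
      also have "\<dots> = e" using m1 m2 xH e by simp
      finally have "t (t e x e) e x = e" .
      then show "\<exists>y\<in>carrier (hgrp H t e). y \<otimes>\<^bsub>hgrp H t e\<^esub> x = \<one>\<^bsub>hgrp H t e\<^esub>"
        using x e cl by (auto simp: hgrp_def intro!: bexI[of _ "t e x e"])
    qed
  qed
  fix x y z assume xyz: "x \<in> H" "y \<in> H" "z \<in> H"
  have "inv\<^bsub>hgrp H t e\<^esub> y = t e y e"
  proof (rule group.inv_equality[OF G])
    have "t (t e y e) e y = t e y (t e e y)" using as[of e y e e y] xyz e by simp
    also have "\<dots> = e" using m1 m2 xyz e by simp
    finally show "t e y e \<otimes>\<^bsub>hgrp H t e\<^esub> y = \<one>\<^bsub>hgrp H t e\<^esub>" by (simp add: hgrp_def)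
  qed (use xyz e cl in \<open>auto simp: hgrp_def\<close>)
  moreover have "t (t x e (t e y e)) e z = t x y z"
  proof -
    have "t x e (t e y e) = t (t x e e) y e" using as[of x e e y e] xyz e by simp
    also have "\<dots> = t x y e" using m2 xyz e by simp
    finally have 1: "t x e (t e y e) = t x y e" .
    have "t (t x y e) e z = t x y (t e e z)" using as[of x y e e z] xyz e by simp
    also have "\<dots> = t x y z" using m1 xyz e by simp
    finally show ?thesis using 1 by simp
  qed
  ultimately show "t x y z = x \<otimes>\<^bsub>hgrp H t e\<^esub> inv\<^bsub>hgrp H t e\<^esub> y \<otimes>\<^bsub>hgrp H t e\<^esub> z"
    by (simp add: hgrp_def)
qed


abbreviation "E0 \<equiv> cls (Gen {})"
abbreviation "g1 \<equiv> cls (Gen {0})"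
abbreviation "GG \<equiv> hgrp K0 K0_op E0"

lemma E0_in: "E0 \<in> K0" by (rule cls_in) simp
lemma g1_in: "g1 \<in> K0" by (rule cls_in) simp
lemma GG: "group GG" using heap_group(1)[OF heap_K0 E0_in] .
lemma GG_op: "x \<in> K0 \<Longrightarrow> y \<in> K0 \<Longrightarrow> z \<in> K0 \<Longrightarrow> K0_op x y z = x \<otimes>\<^bsub>GG\<^esub> inv\<^bsub>GG\<^esub> y \<otimes>\<^bsub>GG\<^esub> z"
  using heap_group(2)[OF heap_K0 E0_in] .
lemma GG_carrier[simp]: "carrier GG = K0" by (simp add: hgrp_def)

definition psi :: "int \<Rightarrow> nat set hterm set" where
  "psi n = g1 [^]\<^bsub>GG\<^esub> n"

lemma psi_in: "psi n \<in> K0"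
  unfolding psi_def using group.int_pow_closed[OF GG, of g1] g1_in by simp

lemma iso_card: "finite A \<Longrightarrow> finite B \<Longrightarrow> card A = card B \<Longrightarrow> cls (Gen A) = cls (Gen B)"
  by (rule cls_eq, rule gh_rel.iso) (auto, metis bij_betw_iff_card bij_fs_iso)

lemma psi_nat: "psi (int k) = cls (Gen {0..<k})"
proof (induction k)
  case 0 then show ?case by (simp add: psi_def int_pow_int hgrp_def)
next
  case (Suc k)
  have "psi (int (Suc k)) = psi (int k) \<otimes>\<^bsub>GG\<^esub> g1" by (simp only: psi_def int_pow_int nat_pow_Suc)
  also have "\<dots> = K0_op (cls (Gen {0..<k})) E0 (cls (Gen {k}))"
    using Suc iso_card[of "{0}" "{k}"] by (simp add: hgrp_def)
  also have "\<dots> = cls (Tri (Gen {0..<k}) (Gen ({0..<k} \<inter> {k})) (Gen {k}))"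
    by (simp add: K0_op_cls)
  also have "\<dots> = cls (Gen ({0..<k} \<union> {k}))" by (rule cls_eq, rule union_po) auto
  also have "{0..<k} \<union> {k} = {0..<Suc k}" by auto
  finally show ?case .
qed

lemma psi_hom: "psi (p - q + r) = K0_op (psi p) (psi q) (psi r)"
proof -
  interpret group GG by (rule GG)
  have "psi (p - q + r) = psi p \<otimes>\<^bsub>GG\<^esub> inv\<^bsub>GG\<^esub> psi q \<otimes>\<^bsub>GG\<^esub> psi r"
    unfolding psi_def using g1_in by (simp add: int_pow_mult[symmetric] int_pow_neg[symmetric])
  then show ?thesis using GG_op psi_in by simp
qed

lemma cls_psi: "t \<in> wf_terms \<Longrightarrow> cls t = psi (ev t)"
proof (induction t)
  case (Gen A)
  then have "cls (Gen A) = cls (Gen {0..<card A})" by (intro iso_card) auto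
  then show ?case by (simp add: psi_nat)
next
  case (Tri a b c)
  then show ?case by (simp add: K0_op_cls[symmetric] psi_hom)
qed

lemma phi_inj: "x \<in> K0 \<Longrightarrow> y \<in> K0 \<Longrightarrow> phi x = phi y \<Longrightarrow> x = y"
  by (elim K0_E) (metis phi_cls cls_psi)

lemma phi_bij: "bij_betw phi K0 (UNIV :: int set)"
  unfolding bij_betw_def
proof
  show "inj_on phi K0" using phi_inj by (meson inj_onI)
  have "n \<in> phi ` K0" for n :: int

    proof (cases "n \<ge> 0")
      case True
      then have "phi (cls (Gen {0..<nat n})) = n" by (simp add: phi_cls)
      then show ?thesis using cls_in[of "Gen {0..<nat n}"] by (metis image_eqI wf_Gen finite_atLeastLessThan)
    next
      case False
      then have "phi (cls (Tri (Gen {}) (Gen {0..<nat (-n)}) (Gen {}))) = n" by (simp add: phi_cls)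
      moreover have "cls (Tri (Gen {}) (Gen {0..<nat (-n)}) (Gen {})) \<in> K0" by (rule cls_in) simp
      ultimately show ?thesis by (metis image_eqI)
    qed
  then show "phi ` K0 = UNIV" by auto
qed

definition rho :: "int \<Rightarrow> nat set hterm set" where
  "rho = inv_into K0 phi"

lemma rho_in: "rho n \<in> K0"
  unfolding rho_def using phi_bij by (metis UNIV_I bij_betw_def inv_into_into)
lemma phi_rho[simp]: "phi (rho n) = n"
  unfolding rho_def using phi_bij by (metis UNIV_I bij_betw_def f_inv_into_f)
lemma rho_phi: "x \<in> K0 \<Longrightarrow> rho (phi x) = x"
  using phi_inj rho_in phi_rho by blast
lemma rho_hom: "rho (p - q + r) = K0_op (rho p) (rho q) (rho r)"
  by (rule phi_inj) (simp_all add: rho_in K0_op_closed phi_op)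
lemma rho_card: "finite A \<Longrightarrow> rho (int (card A)) = cls (Gen A)"
  using rho_phi[of "cls (Gen A)"] cls_in[of "Gen A"] by (simp add: phi_cls)

definition mm :: "nat set hterm set \<Rightarrow> nat set hterm set \<Rightarrow> nat set hterm set" where
  "mm x y = rho (phi x * phi y)"

lemma truss_mm: "truss K0 K0_op mm"
  unfolding truss_def
proof (intro conjI ballI heap_K0)
  fix a b assume "a \<in> K0" "b \<in> K0" then show "mm a b \<in> K0" by (simp add: mm_def rho_in)
next
  fix a b c assume "a \<in> K0" "b \<in> K0" "c \<in> K0"
  then show "mm (mm a b) c = mm a (mm b c)" by (simp add: mm_def mult.assoc)
next
  fix w x y z assume h: "w \<in> K0" "x \<in> K0" "y \<in> K0" "z \<in> K0"
  show "K0_op (mm w x) (mm w y) (mm w z) = mm w (K0_op x y z)"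
    using h by (simp add: mm_def rho_hom[symmetric] phi_op algebra_simps)
  show "K0_op (mm x w) (mm y w) (mm z w) = mm (K0_op x y z) w"
    using h by (simp add: mm_def rho_hom[symmetric] phi_op algebra_simps)
qed

lemma prod_card: "finite A \<Longrightarrow> finite B \<Longrightarrow> bij_betw h (A \<times> B) P \<Longrightarrow> finite P \<and> card P = card A * card B"
  by (metis bij_betw_finite bij_betw_same_card card_cartesian_product finite_cartesian_product)

lemma mm_prod: "finite A \<and> finite B \<and> (\<exists>h. bij_betw h (A \<times> B) P) \<Longrightarrow> mm (K0_cl A) (K0_cl B) = K0_cl P"
proof (elim conjE exE)
  fix h assume h: "finite A" "finite B" "bij_betw h (A \<times> B) P"
  from prod_card[OF h] have "finite P" "card P = card A * card B" by auto
  then show ?thesis using h unfolding K0_cl_def mm_def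
    by (simp add: phi_cls rho_card[symmetric])
qed

lemma truss_parts:
  assumes "truss H t m" "w \<in> H" "x \<in> H" "y \<in> H" "z \<in> H"
  shows "t (m w x) (m w y) (m w z) = m w (t x y z)" "t (m x w) (m y w) (m z w) = m (t x y z) w"
  using assms unfolding truss_def by blast+

lemma mm_unique:
  assumes tr: "truss K0 K0_op m'"
    and pr: "\<forall>A B P. finite A \<and> finite B \<and> (\<exists>h. bij_betw h (A \<times> B) P) \<longrightarrow>
              m' (K0_cl A) (K0_cl B) = K0_cl P"
  shows "m' (rho a) (rho b) = rho (a * b)"
proof -
  have pos: "m' (rho a) (rho b) = rho (a * b)" if "a \<ge> 0" "b \<ge> 0" for a b
  proof -
    have ra: "rho a = K0_cl {0..<nat a}" using rho_card[of "{0..<nat a}"] that by (simp add: K0_cl_def)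
    have rb: "rho b = K0_cl {0..<nat b}" using rho_card[of "{0..<nat b}"] that by (simp add: K0_cl_def)
    have rab: "rho (a * b) = K0_cl {0..<nat a * nat b}" using rho_card[of "{0..<nat a * nat b}"] that
      by (simp add: K0_cl_def nat_mult_distrib)
    have "\<exists>h. bij_betw h ({0..<nat a} \<times> {0..<nat b}) {0..<nat a * nat b}"
      by (simp add: bij_betw_iff_card card_cartesian_product)
    then show ?thesis using pr ra rb rab by simp
  qed
  have neg: "rho n = K0_op (rho 0) (rho (-n)) (rho 0)" for n
    using rho_hom[of 0 "-n" 0] by simp
  have nn: "m' (rho a) (rho b) = rho (a * b)" if "a \<ge> 0" for a b
  proof (cases "b \<ge> 0")
    case True then show ?thesis using pos that by blast
  next
    case False
    have "m' (rho a) (rho b) = m' (rho a) (K0_op (rho 0) (rho (-b)) (rho 0))" using neg by metis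
    also have "\<dots> = K0_op (m' (rho a) (rho 0)) (m' (rho a) (rho (-b))) (m' (rho a) (rho 0))"
      using truss_parts(1)[OF tr] rho_in by metis
    also have "\<dots> = K0_op (rho 0) (rho (a * (-b))) (rho 0)" using pos that False by simp
    also have "\<dots> = rho (a * b)" using rho_hom[of 0 "a * (-b)" 0] by simp
    finally show ?thesis .
  qed
  show ?thesis
  proof (cases "a \<ge> 0")
    case True then show ?thesis using nn by blast
  next
    case False
    have "m' (rho a) (rho b) = m' (K0_op (rho 0) (rho (-a)) (rho 0)) (rho b)" using neg by metis
    also have "\<dots> = K0_op (m' (rho 0) (rho b)) (m' (rho (-a)) (rho b)) (m' (rho 0) (rho b))"
      using truss_parts(2)[OF tr] rho_in by metis
    also have "\<dots> = K0_op (rho 0) (rho ((-a) * b)) (rho 0)" using nn False by simp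
    also have "\<dots> = rho (a * b)" using rho_hom[of 0 "(-a) * b" 0] by simp
    finally show ?thesis .
  qed
qed

theorem mainTheorem6:
  shows "\<exists>\<phi>. bij_betw \<phi> K0 (UNIV :: int set) \<and>
     (\<forall>x\<in>K0. \<forall>y\<in>K0. \<forall>z\<in>K0. \<phi> (K0_op x y z) = \<phi> x - \<phi> y + \<phi> z) \<and>
     (\<forall>A. finite A \<longrightarrow> \<phi> (K0_cl A) = int (card A)) \<and>
     (\<exists>m. truss K0 K0_op m \<and>
        (\<forall>A B P. finite A \<and> finite B \<and> (\<exists>h. bij_betw h (A \<times> B) P) \<longrightarrow>
            m (K0_cl A) (K0_cl B) = K0_cl P) \<and>
        (\<forall>x\<in>K0. \<forall>y\<in>K0. \<phi> (m x y) = \<phi> x * \<phi> y) \<and>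
        (\<forall>m'. truss K0 K0_op m' \<and>
           (\<forall>A B P. finite A \<and> finite B \<and> (\<exists>h. bij_betw h (A \<times> B) P) \<longrightarrow>
              m' (K0_cl A) (K0_cl B) = K0_cl P) \<longrightarrow>
           (\<forall>x\<in>K0. \<forall>y\<in>K0. m' x y = m x y)))"
proof (intro exI[of _ phi] conjI ballI allI impI exI[of _ mm])
  show "bij_betw phi K0 UNIV" by (rule phi_bij)
  show "\<And>x y z. x \<in> K0 \<Longrightarrow> y \<in> K0 \<Longrightarrow> z \<in> K0 \<Longrightarrow> phi (K0_op x y z) = phi x - phi y + phi z"
    by (rule phi_op)
  show "\<And>A. finite A \<Longrightarrow> phi (K0_cl A) = int (card A)" by (simp add: K0_cl_def phi_cls)
  show "truss K0 K0_op mm" by (rule truss_mm)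
  show "\<And>A B P. finite A \<and> finite B \<and> (\<exists>h. bij_betw h (A \<times> B) P) \<Longrightarrow> mm (K0_cl A) (K0_cl B) = K0_cl P"
    by (rule mm_prod)
  show "\<And>x y. x \<in> K0 \<Longrightarrow> y \<in> K0 \<Longrightarrow> phi (mm x y) = phi x * phi y" by (simp add: mm_def)
  fix m' x y
  assume h: "truss K0 K0_op m' \<and>
           (\<forall>A B P. finite A \<and> finite B \<and> (\<exists>h. bij_betw h (A \<times> B) P) \<longrightarrow>
              m' (K0_cl A) (K0_cl B) = K0_cl P)" and xy: "x \<in> K0" "y \<in> K0"
  have "m' (rho (phi x)) (rho (phi y)) = rho (phi x * phi y)"
    using h by (intro mm_unique) auto
  then show "m' x y = mm x y" using xy by (simp add: rho_phi mm_def)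
qed

end
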